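(* For every prime power $q$ of characteristic $p\ge3$, the number $J_{\mathrm{L}}(q)$ of distinct $j$-invariants of the Legendre curves $E_{\mathrm{L},u}$, $u\in\mathbb{F}_q\setminus\{0,1\}$, equals $\left\lfloor\frac{q+5}{6}\right\rfloor$.
   Context: For $u\in\mathbb{F}_q\setminus\{0,1\}$ ($q$ odd), $E_{\mathrm{L},u}$ is the elliptic curve $Y^2=X(X-1)(X-u)$ over $\mathbb{F}_q$, with $j$-invariant $j(E_{\mathrm{L},u})=\frac{2^8(u^2-u+1)^3}{(u^2-u)^2}$. $J_{\mathrm{L}}(q)=\#\{j(E_{\mathrm{L},u}) : u\in\mathbb{F}_q\setminus\{0,1\}\}$, i.e. the number of $\overline{\mathbb{F}}_q$-isomorphism classes represented in this family. *)

theory Defs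
  imports Main
begin

text \<open>j-invariant of the Legendre curve Y^2 = X(X-1)(X-u).\<close>
definition j_legendre :: "'a::field \<Rightarrow> 'a" where
  "j_legendre u = (2^8 * (u^2 - u + 1)^3) / ((u^2 - u)^2)"

definition J_L :: "'a::{field,finite} itself \<Rightarrow> nat" where
  "J_L _ = card (j_legendre ` ((UNIV :: 'a set) - {0, 1}))"

end

theory Submission
  imports Defs Complex_Main
begin

lemma two_ne: assumes "CHAR('a::field) \<noteq> 2" shows "(2::'a) \<noteq> 0"
proof
  assume "(2::'a) = 0"
  hence "(of_nat 2::'a) = 0" by simp
  hence "CHAR('a) dvd 2" using of_nat_eq_0_iff_char_dvd by blast
  moreover have "CHAR('a) \<noteq> 0" using \<open>CHAR('a) dvd 2\<close> by (metis dvd_0_left_iff zero_neq_numeral)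
  moreover have "CHAR('a) \<le> 2" using \<open>CHAR('a) dvd 2\<close> by (simp add: dvd_imp_le)
  ultimately show False using assms CHAR_not_1 by (metis One_nat_def le_Suc_eq le_zero_eq numeral_2_eq_2)
qed

lemma three_eq: "(3::'a::field) = 0 \<longleftrightarrow> CHAR('a) = 3"
proof -
  have "(3::'a) = of_nat 3" by simp
  hence "(3::'a) = 0 \<longleftrightarrow> CHAR('a) dvd 3" using of_nat_eq_0_iff_char_dvd by metis
  also have "\<dots> \<longleftrightarrow> CHAR('a) = 3"
  proof
    assume "CHAR('a) dvd 3"
    moreover have "CHAR('a) \<noteq> 0" using \<open>CHAR('a) dvd 3\<close> by (metis dvd_0_left_iff zero_neq_numeral)
    moreover have "CHAR('a) \<le> 3" using \<open>CHAR('a) dvd 3\<close> by (simp add: dvd_imp_le)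
    moreover have "CHAR('a) \<noteq> 2" using \<open>CHAR('a) dvd 3\<close> by auto
    ultimately show "CHAR('a) = 3" using CHAR_not_1 by (metis One_nat_def le_Suc_eq le_zero_eq numeral_2_eq_2 numeral_3_eq_3)
  qed simp
  finally show ?thesis .
qed

lemma jeq_poly:
  fixes u v :: "'a::field"
  assumes "(2::'a)\<noteq>0" "u\<noteq>0" "u\<noteq>1" "v\<noteq>0" "v\<noteq>1"
  shows "j_legendre u = j_legendre v \<longleftrightarrow>
     (u-v)*(u+v-1)*(u*v-1)*(u*v-u+1)*(u*v-v+1)*(u*v-u-v) = 0"
proof -
  have du: "(u^2-u)^2 \<noteq> 0" using assms by (simp add: power2_eq_square right_diff_distrib[symmetric])
  have dv: "(v^2-v)^2 \<noteq> 0" using assms by (simp add: power2_eq_square right_diff_distrib[symmetric])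
  have c: "(2::'a)^8 \<noteq> 0" by (rule power_not_zero[OF assms(1)])
  have "j_legendre u = j_legendre v \<longleftrightarrow>
     2^8 * (u^2-u+1)^3 * (v^2-v)^2 = 2^8 * (v^2-v+1)^3 * (u^2-u)^2"
    unfolding j_legendre_def using du dv by (simp add: frac_eq_eq mult.assoc)
  also have "\<dots> \<longleftrightarrow> (u^2-u+1)^3 * (v^2-v)^2 - (v^2-v+1)^3 * (u^2-u)^2 = 0"
    using c by (simp add: mult.assoc)
  also have "(u^2-u+1)^3 * (v^2-v)^2 - (v^2-v+1)^3 * (u^2-u)^2 =
     (u-v)*(u+v-1)*(u*v-1)*(u*v-u+1)*(u*v-v+1)*(u*v-u-v)"
    by algebra
  finally show ?thesis .
qed

definition orb :: "'a::field \<Rightarrow> 'a set" where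
  "orb u = {u, 1-u, 1/u, 1/(1-u), u/(u-1), (u-1)/u}"

lemma prod_orb:
  fixes u v :: "'a::field"
  assumes "u\<noteq>0" "u\<noteq>1"
  shows "(u-v)*(u+v-1)*(u*v-1)*(u*v-u+1)*(u*v-v+1)*(u*v-u-v) = 0 \<longleftrightarrow> v \<in> orb u"
proof -
  have a: "u - 1 \<noteq> 0" "1 - u \<noteq> 0" using assms by auto
  have "u-v = 0 \<longleftrightarrow> v = u" by auto
  moreover have "u+v-1 = 0 \<longleftrightarrow> v = 1-u" by (auto simp: algebra_simps)
  moreover have "u*v-1 = 0 \<longleftrightarrow> v = 1/u" using assms by (auto simp: field_simps)
  moreover have "u*v-u+1 = 0 \<longleftrightarrow> v = (u-1)/u" using assms by (auto simp: field_simps)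
  moreover have "u*v-v+1 = 0 \<longleftrightarrow> v = 1/(1-u)" using a by (auto simp: field_simps)
  moreover have "u*v-u-v = 0 \<longleftrightarrow> v = u/(u-1)" using a by (auto simp: field_simps)
  ultimately show ?thesis unfolding orb_def by auto
qed

lemma orb_sub:
  fixes u :: "'a::field"
  assumes "u\<noteq>0" "u\<noteq>1"
  shows "orb u \<subseteq> UNIV - {0,1}"
  using assms unfolding orb_def by (auto simp: field_simps)

lemma fiber_orb:
  fixes u :: "'a::field"
  assumes "(2::'a)\<noteq>0" "u\<noteq>0" "u\<noteq>1"
  shows "{v \<in> UNIV - {0,1}. j_legendre v = j_legendre u} = orb u"
proof -
  have "v \<in> orb u" if "v \<noteq> 0" "v \<noteq> 1" "j_legendre v = j_legendre u" for v
    using jeq_poly[OF assms(1-3) that(1,2)] prod_orb[OF assms(2,3), of v] that(3) by auto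
  moreover have "j_legendre v = j_legendre u" if "v \<in> orb u" for v
  proof -
    have "v \<noteq> 0" "v \<noteq> 1" using orb_sub[OF assms(2,3)] that by auto
    thus ?thesis using jeq_poly[OF assms(1-3), of v] prod_orb[OF assms(2,3), of v] that by auto
  qed
  ultimately show ?thesis using orb_sub[OF assms(2,3)] by auto
qed

lemma card_image_sum:
  assumes "finite A"
  shows "real (card (f ` A)) = (\<Sum>u\<in>A. 1 / real (card {v\<in>A. f v = f u}))"
proof -
  have "(\<Sum>u\<in>A. 1 / real (card {v\<in>A. f v = f u})) =
     (\<Sum>y\<in>f ` A. \<Sum>u\<in>{x\<in>A. f x = y}. 1 / real (card {v\<in>A. f v = f u}))"
    by (rule sum.image_gen[OF assms])
  also have "\<dots> = (\<Sum>y\<in>f ` A. \<Sum>u\<in>{x\<in>A. f x = y}. 1 / real (card {v\<in>A. f v = y}))"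
    by (rule sum.cong) auto
  also have "\<dots> = (\<Sum>y\<in>f ` A. 1)"
  proof (rule sum.cong)
    fix y assume "y \<in> f ` A"
    hence "{v\<in>A. f v = y} \<noteq> {}" by auto
    moreover have "finite {v\<in>A. f v = y}" using assms by auto
    ultimately have "card {v\<in>A. f v = y} \<noteq> 0" by auto
    thus "(\<Sum>u\<in>{x\<in>A. f x = y}. 1 / real (card {v\<in>A. f v = y})) = 1"
      by simp
  qed simp
  finally show ?thesis by simp
qed

lemma sq1: fixes u :: "'a::field" shows "u*u = 1 \<Longrightarrow> u = 1 \<or> u = -1"
proof -
  assume "u*u = 1"
  hence "(u-1)*(u+1) = 0" by (simp add: algebra_simps)
  thus ?thesis by (metis add_eq_0_iff add.commute eq_iff_diff_eq_0 mult_eq_0_iff)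
qed

lemma orb_generic:
  fixes u :: "'a::field"
  assumes "u\<noteq>0" "u\<noteq>1" "u\<noteq>-1" "u\<noteq>2" "2*u\<noteq>1" "u*u-u+1\<noteq>0"
  shows "card (orb u) = 6"
proof -
  have a: "u - 1 \<noteq> 0" "1 - u \<noteq> 0" "u - 2 \<noteq> 0" "2*u-1\<noteq>0" using assms by (auto simp: algebra_simps)
  have a3: "u+1 \<noteq> 0" using assms(3) by (metis add_eq_0_iff add.commute)
  note a = a a3
  have d0: "u \<noteq> 1-u"
  proof
    assume "u = 1-u"
    thus False using assms a by (auto simp: field_simps dest: sq1)
  qed
  have d1: "u \<noteq> 1/u"
  proof
    assume "u = 1/u"
    hence "u*u = 1" using assms by (auto simp: field_simps)
    hence "(u-1)*(u+1) = 0" by (simp add: algebra_simps)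
    thus False using a by simp
  qed
  have d2: "u \<noteq> 1/(1-u)"
  proof
    assume "u = 1/(1-u)"
    thus False using assms a by (auto simp: field_simps dest: sq1)
  qed
  have d3: "u \<noteq> u/(u-1)"
  proof
    assume "u = u/(u-1)"
    thus False using assms a by (auto simp: field_simps dest: sq1)
  qed
  have d4: "u \<noteq> (u-1)/u"
  proof
    assume "u = (u-1)/u"
    thus False using assms a by (auto simp: field_simps dest: sq1)
  qed
  have d5: "1-u \<noteq> 1/u"
  proof
    assume "1-u = 1/u"
    thus False using assms a by (auto simp: field_simps dest: sq1)
  qed
  have d6: "1-u \<noteq> 1/(1-u)"
  proof
    assume "1-u = 1/(1-u)"
    thus False using assms a by (auto simp: field_simps dest: sq1)
  qed
  have d7: "1-u \<noteq> u/(u-1)"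
  proof
    assume "1-u = u/(u-1)"
    thus False using assms a by (auto simp: field_simps dest: sq1)
  qed
  have d8: "1-u \<noteq> (u-1)/u"
  proof
    assume "1-u = (u-1)/u"
    hence "u*u = 1" using assms by (auto simp: field_simps)
    hence "(u-1)*(u+1) = 0" by (simp add: algebra_simps)
    thus False using a by simp
  qed
  have d9: "1/u \<noteq> 1/(1-u)"
  proof
    assume "1/u = 1/(1-u)"
    thus False using assms a by (auto simp: field_simps dest: sq1)
  qed
  have d10: "1/u \<noteq> u/(u-1)"
  proof
    assume "1/u = u/(u-1)"
    thus False using assms a by (auto simp: field_simps dest: sq1)
  qed
  have d11: "1/u \<noteq> (u-1)/u"
  proof
    assume "1/u = (u-1)/u"
    thus False using assms a by (auto simp: field_simps dest: sq1)
  qed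
  have d12: "1/(1-u) \<noteq> u/(u-1)"
  proof
    assume "1/(1-u) = u/(u-1)"
    thus False using assms a by (auto simp: field_simps dest: sq1)
  qed
  have d13: "1/(1-u) \<noteq> (u-1)/u"
  proof
    assume "1/(1-u) = (u-1)/u"
    thus False using assms a by (auto simp: field_simps dest: sq1)
  qed
  have d14: "u/(u-1) \<noteq> (u-1)/u"
  proof
    assume "u/(u-1) = (u-1)/u"
    thus False using assms a by (auto simp: field_simps dest: sq1)
  qed
  show ?thesis unfolding orb_def using d0 d1 d2 d3 d4 d5 d6 d7 d8 d9 d10 d11 d12 d13 d14 by simp
qed

lemma orb_same:
  fixes u v :: "'a::field"
  assumes "(2::'a)\<noteq>0" "u\<noteq>0" "u\<noteq>1" "v \<in> orb u"
  shows "orb v = orb u"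
proof -
  have v: "v \<noteq> 0" "v \<noteq> 1" using orb_sub[OF assms(2,3)] assms(4) by auto
  have "v \<in> {v \<in> UNIV - {0,1}. j_legendre v = j_legendre u}" using fiber_orb[OF assms(1-3)] assms(4) by simp
  hence "j_legendre v = j_legendre u" by simp
  hence "{x \<in> UNIV - {0,1}. j_legendre x = j_legendre v} = {x \<in> UNIV - {0,1}. j_legendre x = j_legendre u}" by simp
  thus ?thesis using fiber_orb[OF assms(1-3)] fiber_orb[OF assms(1) v] by simp
qed

lemma two_m1: "(2::'a::field) = -1 \<longleftrightarrow> (3::'a) = 0"
proof -
  have "(2::'a) - (-1) = 3" by simp
  thus ?thesis by (metis eq_iff_diff_eq_0)
qed

lemma orb_m1:
  assumes "(2::'a::field)\<noteq>0" "(3::'a)\<noteq>0"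
  shows "orb (-1::'a) = {-1,2,1/2}" "card (orb (-1::'a)) = 3"
proof -
  have f1: "1 - (-1::'a) = 2" "1/(-1::'a) = -1" "(-1::'a)/(-1-1) = 1/2" "(-1-1)/(-1::'a) = 2"
    by (simp_all add: divide_minus_left)
  have e: "orb (-1::'a) = {-1,2,1/2}" unfolding orb_def by (simp only: f1) auto
  have "(-1::'a) \<noteq> 2" using assms two_m1 by metis
  moreover have "(-1::'a) \<noteq> 1/2"
  proof
    assume "(-1::'a) = 1/2"
    hence "(-1::'a) * 2 = 1" using assms(1) by (simp add: eq_divide_eq)
    hence "(2::'a) = -1" by (simp add: minus_equation_iff)
    thus False using assms two_m1 by metis
  qed
  moreover have "(2::'a) \<noteq> 1/2"
  proof
    assume "(2::'a) = 1/2"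
    hence "(2::'a) * 2 = 1" using assms(1) by (simp add: eq_divide_eq)
    hence "(4::'a) = 1" by simp
    moreover have "(4::'a) - 1 = 3" by simp
    ultimately have "(3::'a) = 0" by simp
    thus False using assms by simp
  qed
  ultimately show "card (orb (-1::'a)) = 3" using e by simp
  show "orb (-1::'a) = {-1,2,1/2}" by (rule e)
qed

lemma orb_m1_char3:
  assumes "(3::'a::field) = 0"
  shows "orb (-1::'a) = {-1}"
proof -
  have t: "(2::'a) = -1" using assms two_m1 by metis
  have h: "1/(2::'a) = -1" by (simp add: t)
  have "1 - (-1::'a) = -1" "(-1::'a)/(-1-1) = -1" "(-1-1)/(-1::'a) = -1" using t h by (simp_all add: divide_minus_left)
  thus ?thesis unfolding orb_def using h by simp
qed

lemma orb_w:
  fixes w :: "'a::field"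
  assumes "w*w-w+1 = 0" "(3::'a)\<noteq>0"
  shows "orb w = {w, 1-w}" "w \<noteq> 1-w" "w \<noteq> 0" "w \<noteq> 1"
proof -
  show w0: "w \<noteq> 0" using assms by auto
  show w1: "w \<noteq> 1" using assms by auto
  have "w*w = (w*w-w+1) + (w-1)" by (simp add: algebra_simps)
  hence ww: "w*w = w - 1" using assms(1) by simp
  have n1: "1 - w \<noteq> 0" "w - 1 \<noteq> 0" using w1 by auto
  have p: "(1-w)*w = 1"
  proof -
    have "(1-w)*w = 1 - (w*w-w+1)" by (simp add: algebra_simps)
    thus ?thesis using assms(1) by simp
  qed
  have i1: "1/w = 1-w" using p w0 by (simp add: divide_eq_eq)
  have i2: "1/(1-w) = w" using p n1 by (simp add: divide_eq_eq mult.commute)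
  have q: "(1-w)*(w-1) = w"
  proof -
    have "(1-w)*(w-1) = w - (w*w-w+1)" by (simp add: algebra_simps)
    thus ?thesis using assms(1) by simp
  qed
  have i3: "w/(w-1) = 1-w" using q n1 by (simp add: divide_eq_eq)
  have i4: "(w-1)/w = w" using ww w0 by (simp add: divide_eq_eq)
  show "orb w = {w, 1-w}" unfolding orb_def by (simp only: i1 i2 i3 i4) auto
  show "w \<noteq> 1-w"
  proof
    assume "w = 1-w"
    hence h: "2*w = 1" by (simp add: algebra_simps)
    have "4*(w*w-w+1) = (2*w)*(2*w) - 2*(2*w) + 4" by (simp add: algebra_simps)
    also have "\<dots> = 3" unfolding h by simp
    finally show False using assms by simp
  qed
qed

lemma R_eq:
  fixes w :: "'a::field"
  assumes "w*w-w+1 = 0"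
  shows "{u. u*u-u+1 = 0} = {w, 1-w}"
proof -
  have "u*u-u+1 = 0 \<longleftrightarrow> u = w \<or> u = 1-w" for u
  proof -
    have "(u-w)*(u+w-1) = (u*u-u+1) - (w*w-w+1)" by algebra
    hence "u*u-u+1 = 0 \<longleftrightarrow> (u-w)*(u+w-1) = 0" using assms by simp
    also have "\<dots> \<longleftrightarrow> u - w = 0 \<or> u + w - 1 = 0" by simp
    also have "\<dots> \<longleftrightarrow> u = w \<or> u = 1-w" by (simp add: eq_diff_eq diff_eq_eq add.commute)
    finally show ?thesis .
  qed
  thus ?thesis by auto
qed

lemma sum_split_generic:
  fixes A S :: "'a::field set"
  assumes "finite A" "S \<subseteq> A" "\<And>u. u \<in> A - S \<Longrightarrow> card (orb u) = 6"
  shows "(\<Sum>u\<in>A. 1 / real (card (orb u))) = real (card (A - S)) / 6 + (\<Sum>u\<in>S. 1 / real (card (orb u)))"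
proof -
  have "(\<Sum>u\<in>A. 1 / real (card (orb u))) = (\<Sum>u\<in>A - S. 1 / real (card (orb u))) + (\<Sum>u\<in>S. 1 / real (card (orb u)))"
    by (rule sum.subset_diff[OF assms(2,1)])
  also have "(\<Sum>u\<in>A - S. 1 / real (card (orb u))) = (\<Sum>u\<in>A - S. 1 / 6)"
    using assms(3) by (intro sum.cong) auto
  finally show ?thesis by simp
qed

theorem mainTheorem4:
  assumes "CHAR('a::{field,finite}) \<noteq> 2"
  shows "J_L TYPE('a) = (card (UNIV :: 'a set) + 5) div 6"
proof -
  define A where "A = (UNIV :: 'a set) - {0,1}"
  define q where "q = card (UNIV :: 'a set)"
  have two: "(2::'a) \<noteq> 0" using two_ne[OF assms] .
  have fin: "finite A" by simp
  have qA: "q = card A + 2"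
  proof -
    have "(UNIV::'a set) = A \<union> {0,1}" unfolding A_def by auto
    hence "q = card (A \<union> {0,1})" unfolding q_def by simp
    also have "\<dots> = card A + card {0::'a,1}" by (rule card_Un_disjoint) (auto simp: A_def)
    finally show ?thesis by simp
  qed
  have J: "real (J_L TYPE('a)) = (\<Sum>u\<in>A. 1 / real (card (orb u)))"
  proof -
    have "real (J_L TYPE('a)) = (\<Sum>u\<in>A. 1 / real (card {v\<in>A. j_legendre v = j_legendre u}))"
      unfolding J_L_def A_def[symmetric] by (rule card_image_sum[OF fin])
    also have "\<dots> = (\<Sum>u\<in>A. 1 / real (card (orb u)))"
      by (intro sum.cong refl) (use fiber_orb[OF two] in \<open>auto simp: A_def\<close>)
    finally show ?thesis .
  qed
  have m1A: "(-1::'a) \<in> A" using two unfolding A_def by (auto simp: two_m1[symmetric] eq_neg_iff_add_eq_0)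
  have key: "6 * J_L TYPE('a) = q + 1 \<or> 6 * J_L TYPE('a) = q + 3 \<or> 6 * J_L TYPE('a) = q + 5"
  proof (cases "(3::'a) = 0")
    case True
    have t: "(2::'a) = -1" using True two_m1 by metis
    have gen: "card (orb u) = 6" if "u \<in> A - {-1}" for u
    proof (rule orb_generic)
      show "u \<noteq> 0" "u \<noteq> 1" "u \<noteq> -1" using that by (auto simp: A_def)
      show "u \<noteq> 2" using that t by auto
      show "2*u \<noteq> 1"
      proof
        assume "2*u = 1"
        hence "(-1)*u = 1" by (simp only: t)
        hence "u = -1" by (simp add: minus_equation_iff)
        thus False using that by simp
      qed
      have "(u+1)*(u+1) = (u*u-u+1) + 3*u" by algebra
      hence "u*u-u+1 = (u+1)*(u+1)" using True by simp
      moreover have "u+1 \<noteq> 0" using that by (auto simp: add_eq_0_iff add.commute)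
      ultimately show "u*u-u+1 \<noteq> 0" by simp
    qed
    have e: "(\<Sum>u\<in>A. 1 / real (card (orb u))) = real (card (A - {-1})) / 6 + (\<Sum>u\<in>{-1::'a}. 1 / real (card (orb u)))"
      by (rule sum_split_generic[of A "{-1::'a}"]) (use fin m1A gen in auto)
    have e1: "(\<Sum>u\<in>{-1::'a}. 1 / real (card (orb u))) = 1" by (simp add: orb_m1_char3[OF True])
    have "real (J_L TYPE('a)) = real (card (A - {-1})) / 6 + 1"
      using J e e1 by linarith
    moreover have "card (A - {-1}) + 1 = card A" using m1A fin by (metis card_Suc_Diff1 Suc_eq_plus1)
    ultimately have "6 * real (J_L TYPE('a)) = real q + 3" using qA by simp
    hence "6 * J_L TYPE('a) = q + 3" by linarith
    thus ?thesis by simp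
  next
    case False
    define T where "T = {-1, 2, 1/2::'a}"
    define R where "R = {u::'a. u*u-u+1 = 0}"
    have finR: "finite R" by simp
    have t1: "(2::'a) \<noteq> 1"
    proof
      assume "(2::'a) = 1"
      hence "(1::'a) + 1 = 1 + 0" by simp
      hence "(1::'a) = 0" by (simp only: add_left_cancel)
      thus False by simp
    qed
    have TA: "T \<subseteq> A" unfolding T_def A_def using two t1 t1[symmetric] m1A[unfolded A_def] by auto
    have RA: "R \<subseteq> A" unfolding R_def A_def by auto
    have TR: "T \<inter> R = {}"
    proof -
      have "(-1::'a)*(-1)-(-1)+1 = 3" "(2::'a)*2-2+1 = 3" by simp_all
      moreover have "(1/2::'a)*(1/2)-(1/2)+1 \<noteq> 0"
      proof
        assume "(1/2::'a)*(1/2)-(1/2)+1 = 0"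
        hence "4 * ((1/2::'a)*(1/2)-(1/2)+1) = 0" by simp
        moreover have "4 * ((1/2::'a)*(1/2)-(1/2)+1) = 3"
        proof -
          have h: "2 * (1/2::'a) = 1" using two by simp
          have "4 * ((1/2::'a)*(1/2)-(1/2)+1) = (2*(1/2))*(2*(1/2)) - 2*(2*(1/2)) + 4"
            by (simp only: algebra_simps) simp
          also have "\<dots> = (3::'a)" unfolding h by simp
          finally show ?thesis .
        qed
        ultimately show False using False by simp
      qed
      ultimately show ?thesis using False unfolding T_def R_def by auto
    qed
    have cT: "card T = 3" using orb_m1[OF two False] unfolding T_def by simp
    have sT: "(\<Sum>u\<in>T. 1 / real (card (orb u))) = 1"
    proof -
      have "(\<Sum>u\<in>T. 1 / real (card (orb u))) = (\<Sum>u\<in>T. 1 / 3)"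
      proof (intro sum.cong refl)
        fix u assume "u \<in> T"
        hence "u \<in> orb (-1)" using orb_m1(1)[OF two False] unfolding T_def by simp
        hence "orb u = orb (-1)" using orb_same[OF two, of "-1" u] two by (auto simp: two_m1[symmetric] eq_neg_iff_add_eq_0)
        thus "1 / real (card (orb u)) = 1/3" using orb_m1(2)[OF two False] by simp
      qed
      thus ?thesis using cT by simp
    qed
    have sR: "(\<Sum>u\<in>R. 1 / real (card (orb u))) = real (card R) / 2"
    proof -
      have "(\<Sum>u\<in>R. 1 / real (card (orb u))) = (\<Sum>u\<in>R. 1 / 2)"
      proof (intro sum.cong refl)
        fix u assume "u \<in> R"
        hence u: "u*u-u+1 = 0" unfolding R_def by simp
        have "card (orb u) = 2" using orb_w[OF u False] by simp
        thus "1 / real (card (orb u)) = 1/2" by simp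
      qed
      thus ?thesis by simp
    qed
    have cR: "card R = 0 \<or> card R = 2"
    proof (cases "R = {}")
      case False
      then obtain w :: 'a where w: "w*w-w+1 = 0" unfolding R_def by auto
      have "R = {w, 1-w}" using R_eq[OF w] unfolding R_def .
      thus ?thesis using orb_w(2)[OF w \<open>(3::'a) \<noteq> 0\<close>] by simp
    qed simp
    define S where "S = T \<union> R"
    have SA: "S \<subseteq> A" using TA RA unfolding S_def by auto
    have gen: "card (orb u) = 6" if "u \<in> A - S" for u
    proof (rule orb_generic)
      show "u \<noteq> 0" "u \<noteq> 1" "u \<noteq> -1" "u \<noteq> 2" using that by (auto simp: A_def S_def T_def)
      show "2*u \<noteq> 1"
      proof
        assume "2*u = 1"
        hence "u = 1/2" using two by (simp add: field_simps)
        thus False using that by (auto simp: S_def T_def)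
      qed
      show "u*u-u+1 \<noteq> 0" using that by (auto simp: S_def R_def)
    qed
    have sS: "(\<Sum>u\<in>S. 1 / real (card (orb u))) = 1 + real (card R) / 2"
    proof -
      have "(\<Sum>u\<in>T \<union> R. 1 / real (card (orb u))) = (\<Sum>u\<in>T. 1 / real (card (orb u))) + (\<Sum>u\<in>R. 1 / real (card (orb u)))"
        by (rule sum.union_disjoint[OF _ finR TR]) (simp add: T_def)
      thus ?thesis unfolding S_def using sT sR by linarith
    qed
    have cS: "card S = 3 + card R" unfolding S_def using card_Un_disjoint[OF _ finR TR] cT by simp
    have cAS: "card (A - S) + card S = card A" using SA fin by (metis card_Diff_subset card_mono finite_subset le_add_diff_inverse2)
    have "real (J_L TYPE('a)) = real (card (A - S)) / 6 + 1 + real (card R) / 2"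
      using J sum_split_generic[OF fin SA gen] sS by simp
    hence "6 * real (J_L TYPE('a)) = real q + 1 + 2 * real (card R)"
      using qA cAS cS by (simp add: field_simps)
    hence "6 * J_L TYPE('a) = q + 1 + 2 * card R" by linarith
    thus ?thesis using cR by auto
  qed
  thus ?thesis unfolding q_def by linarith
qed

end
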